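(* Let $F$ be a Ferrers diagram and let $c\in\mathsf{Rec}^{\mathsf{min}}(G(F))$. Define the $0/1$-filling $T=\phi_{CT}(c)$ of $F$ by setting, for each cell in row $i\in\mathsf{rows}(F)$ and column $j\in\mathsf{cols}(F)$, $T_{ij}=0$ if $i$ topples after $j$ in $\mathsf{CanonTop}(c)$ and $T_{ij}=1$ if $i$ topples before $j$ in $\mathsf{CanonTop}(c)$. Then $\phi_{CT}$ is the inverse of the bijection $\phi_{TC}:\mathsf{EWtab}(F)\to\mathsf{Rec}^{\mathsf{min}}(G(F))$; in particular $T\in\mathsf{EWtab}(F)$ and $\phi_{TC}(T)=c$.
   Context: Ferrers diagrams and graphs: a Ferrers diagram $F$ (English convention) of semiperimeter $n+1$ has rows and columns labeled by $0,\ldots,n$: the $n+1$ unit steps of its south-east boundary path, traversed from top-right to bottom-left, are labeled $0,\ldots,n$; a vertical step labels the row it bounds, a horizontal step the column it bounds (top row labeled $0$). $\mathsf{rows}(F)$, $\mathsf{cols}(F)$ are the label sets; $F$ has a cell in row $i$, column $j$ iff $i<j$. $G(F)$ has vertex set $\{0,\ldots,n\}$ with edges $\{i,j\}$, $i\in\mathsf{rows}(F)$, $j\in\mathsf{cols}(F)$, $i<j$. Sandpile model with sink $0$: configurations $c\in\mathbb{N}^n$; non-sink $v$ unstable if $c_v\ge\deg(v)$; toppling sends one grain to each neighbour (grains to $0$ disappear); toppling the sink adds a grain to each neighbour of $0$. Recurrent: stable configurations obtainable from $c_v=\deg(v)-1$ by adding grains and stabilizing. $\mathsf{Rec}^{\mathsf{min}}(G)$: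 recurrent configurations of minimal total number of grains. Canonical toppling of a recurrent $c$: topple the sink ($U^{(0)}_c=\{0\}$), then alternately topple simultaneously all unstable vertices in $\mathsf{cols}(F)$ ($V^{(1)}_c$), all unstable in $\mathsf{rows}(F)$ ($U^{(1)}_c$), etc.; $\mathsf{CanonTop}(c)=(U^{(0)}_c,V^{(1)}_c,U^{(1)}_c,\ldots)$ is an ordered partition of $\{0,\ldots,n\}$, each vertex toppling exactly once; "$a$ topples before $b$" means the block of $a$ precedes the block of $b$. EW-tableaux: a $0/1$-filling $T$ of $F$ ($T_{ij}$ = entry in row $i$, column $j$) such that (1) the top row consists of 1s, (2) every other row contains at least one 0, (3) no four cells at the corners of a rectangle have 0s in two diagonally opposite corners and 1s in the other two. $\mathsf{EWtab}(F)$ is their set. The map $\phi_{TC}$ sends $T$ to the configuration $c$ with $c_i$ = number of 1s in row $i$ if $i\in\mathsf{rows}(F)$, and $c_i$ = number of 0s in column $i$ if $i\in\mathsf{cols}(F)$, $i\ne 0$; it is known to be a bijection $\mathsf{EWtab}(F)\to\mathsf{Rec}^{\mathsf{min}}(G(F))$. *)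

theory Defs
  imports Main
begin

text \<open>A Ferrers diagram of semiperimeter n+1 is encoded as a pair (n, R) where
  R is the set of row labels among the boundary-step labels 0..n; the remaining
  labels are column labels.  The first step (label 0) bounds the top row and
  the last step (label n) is horizontal.\<close>

type_synonym ferrers = "nat \<times> nat set"

definition ferrers :: "ferrers \<Rightarrow> bool" where
  "ferrers F \<longleftrightarrow> snd F \<subseteq> {0..fst F} \<and> 0 \<in> snd F \<and> fst F \<notin> snd F"

definition rows :: "ferrers \<Rightarrow> nat set" where
  "rows F = snd F"

definition cols :: "ferrers \<Rightarrow> nat set" where
  "cols F = {0..fst F} - snd F"

definition cell :: "ferrers \<Rightarrow> nat \<Rightarrow> nat \<Rightarrow> bool" where
  "cell F i j \<longleftrightarrow> i \<in> rows F \<and> j \<in> cols F \<and> i < j"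

definition adj :: "ferrers \<Rightarrow> nat \<Rightarrow> nat \<Rightarrow> bool" where
  "adj F u v \<longleftrightarrow> cell F u v \<or> cell F v u"

definition deg :: "ferrers \<Rightarrow> nat \<Rightarrow> nat" where
  "deg F v = card {u. u \<le> fst F \<and> adj F u v}"

definition nonsink :: "ferrers \<Rightarrow> nat set" where
  "nonsink F = {1..fst F}"

text \<open>Configurations: functions nat => nat, meaningful on the non-sink vertices 1..n
  (and 0 elsewhere).\<close>
type_synonym config = "nat \<Rightarrow> nat"

definition stable :: "ferrers \<Rightarrow> config \<Rightarrow> bool" where
  "stable F c \<longleftrightarrow> (\<forall>v\<in>nonsink F. c v < deg F v)"

definition topple_set :: "ferrers \<Rightarrow> nat set \<Rightarrow> config \<Rightarrow> config" where
  "topple_set F S c = (\<lambda>u. if u \<in> nonsink F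
      then c u - (if u \<in> S then deg F u else 0) + card {v \<in> S. v \<le> fst F \<and> adj F u v}
      else 0)"

definition topple_step :: "ferrers \<Rightarrow> config \<Rightarrow> config \<Rightarrow> bool" where
  "topple_step F c c' \<longleftrightarrow> (\<exists>v\<in>nonsink F. deg F v \<le> c v \<and> c' = topple_set F {v} c)"

definition stabilizes_to :: "ferrers \<Rightarrow> config \<Rightarrow> config \<Rightarrow> bool" where
  "stabilizes_to F c c' \<longleftrightarrow> (topple_step F)\<^sup>*\<^sup>* c c' \<and> stable F c'"

definition cmax :: "ferrers \<Rightarrow> config" where
  "cmax F = (\<lambda>u. if u \<in> nonsink F then deg F u - 1 else 0)"

inductive reachable :: "ferrers \<Rightarrow> config \<Rightarrow> bool" for F where
  start: "reachable F (cmax F)"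
| add: "reachable F c \<Longrightarrow> v \<in> nonsink F \<Longrightarrow> stabilizes_to F (c(v := c v + 1)) c'
          \<Longrightarrow> reachable F c'"

definition recurrent :: "ferrers \<Rightarrow> config \<Rightarrow> bool" where
  "recurrent F c \<longleftrightarrow> stable F c \<and> reachable F c"

definition Rec_min :: "ferrers \<Rightarrow> config set" where
  "Rec_min F = {c. recurrent F c \<and>
     (\<forall>d. recurrent F d \<longrightarrow> sum c (nonsink F) \<le> sum d (nonsink F))}"

definition canon_blk_of :: "ferrers \<Rightarrow> config \<Rightarrow> nat \<Rightarrow> nat set" where
  "canon_blk_of F d k = (if k = 0 then {0} else
     {v \<in> nonsink F. (if odd k then v \<in> cols F else v \<in> rows F) \<and> deg F v \<le> d v})"

primrec canon_cfg :: "ferrers \<Rightarrow> config \<Rightarrow> nat \<Rightarrow> config" where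
  "canon_cfg F c 0 = c"
| "canon_cfg F c (Suc k) = topple_set F (canon_blk_of F (canon_cfg F c k) k) (canon_cfg F c k)"

definition canon_blk :: "ferrers \<Rightarrow> config \<Rightarrow> nat \<Rightarrow> nat set" where
  "canon_blk F c k = canon_blk_of F (canon_cfg F c k) k"

definition topple_time :: "ferrers \<Rightarrow> config \<Rightarrow> nat \<Rightarrow> nat" where
  "topple_time F c v = (LEAST k. v \<in> canon_blk F c k)"

definition topples_before :: "ferrers \<Rightarrow> config \<Rightarrow> nat \<Rightarrow> nat \<Rightarrow> bool" where
  "topples_before F c a b \<longleftrightarrow> topple_time F c a < topple_time F c b"

text \<open>0/1-fillings: functions nat => nat => nat, with value 0 outside the cells.\<close>
type_synonym filling = "nat \<Rightarrow> nat \<Rightarrow> nat"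

definition EWtab :: "ferrers \<Rightarrow> filling set" where
  "EWtab F = {T.
     (\<forall>i j. \<not> cell F i j \<longrightarrow> T i j = 0) \<and>
     (\<forall>i j. cell F i j \<longrightarrow> T i j \<in> {0, 1}) \<and>
     (\<forall>j. cell F 0 j \<longrightarrow> T 0 j = 1) \<and>
     (\<forall>i\<in>rows F. i \<noteq> 0 \<longrightarrow> (\<exists>j. cell F i j \<and> T i j = 0)) \<and>
     (\<forall>i1 i2 j1 j2. i1 < i2 \<and> j1 < j2 \<and> cell F i1 j1 \<and> cell F i1 j2 \<and>
        cell F i2 j1 \<and> cell F i2 j2 \<longrightarrow>
        \<not> (T i1 j1 = 0 \<and> T i2 j2 = 0 \<and> T i1 j2 = 1 \<and> T i2 j1 = 1) \<and>
        \<not> (T i1 j2 = 0 \<and> T i2 j1 = 0 \<and> T i1 j1 = 1 \<and> T i2 j2 = 1))}"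

definition phi_TC :: "ferrers \<Rightarrow> filling \<Rightarrow> config" where
  "phi_TC F T = (\<lambda>i. if i \<in> nonsink F then
      (if i \<in> rows F then card {j. cell F i j \<and> T i j = 1}
       else card {r. cell F r i \<and> T r i = 0})
    else 0)"

definition phi_CT :: "ferrers \<Rightarrow> config \<Rightarrow> filling" where
  "phi_CT F c = (\<lambda>i j. if cell F i j then (if topples_before F c i j then 1 else 0) else 0)"

end

theory Submission
  imports Defs
begin


locale ew =
  fixes F :: ferrers and T :: filling
  assumes fer: "ferrers F" and ewT: "T \<in> EWtab F"
begin

lemmas ewc = ewT[unfolded EWtab_def mem_Collect_eq]

lemma T_off: "\<not> cell F i j \<Longrightarrow> T i j = 0"
  using conjunct1[OF ewc] by simp
lemma T_01: "cell F i j \<Longrightarrow> T i j = 0 \<or> T i j = 1"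
  using conjunct1[OF conjunct2[OF ewc]] by simp
lemma T_top: "cell F 0 j \<Longrightarrow> T 0 j = 1"
  using conjunct1[OF conjunct2[OF conjunct2[OF ewc]]] by simp
lemma T_zero: "i \<in> rows F \<Longrightarrow> i \<noteq> 0 \<Longrightarrow> \<exists>j. cell F i j \<and> T i j = 0"
  using conjunct1[OF conjunct2[OF conjunct2[OF conjunct2[OF ewc]]]] by simp
lemma T_rect: "i1 < i2 \<Longrightarrow> j1 < j2 \<Longrightarrow> cell F i1 j1 \<Longrightarrow> cell F i1 j2 \<Longrightarrow>
        cell F i2 j1 \<Longrightarrow> cell F i2 j2 \<Longrightarrow>
        \<not> (T i1 j1 = 0 \<and> T i2 j2 = 0 \<and> T i1 j2 = 1 \<and> T i2 j1 = 1) \<and>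
        \<not> (T i1 j2 = 0 \<and> T i2 j1 = 0 \<and> T i1 j1 = 1 \<and> T i2 j2 = 1)"
  using conjunct2[OF conjunct2[OF conjunct2[OF conjunct2[OF ewc]]]] by blast

lemma rows_le: "i \<in> rows F \<Longrightarrow> i \<le> fst F"
  using fer unfolding ferrers_def rows_def by auto
lemma cols_le: "j \<in> cols F \<Longrightarrow> j \<le> fst F"
  unfolding cols_def by auto
lemma zero_row: "0 \<in> rows F"
  using fer unfolding ferrers_def rows_def by auto
lemma rc_disj: "i \<in> rows F \<Longrightarrow> i \<notin> cols F"
  unfolding cols_def rows_def by auto
lemma rc_all: "v \<le> fst F \<Longrightarrow> v \<in> rows F \<or> v \<in> cols F"
  unfolding cols_def rows_def by auto
lemma cellD: "cell F i j \<Longrightarrow> i \<in> rows F \<and> j \<in> cols F \<and> i < j \<and> j \<le> fst F"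
  unfolding cell_def using cols_le by auto
lemma col_nonsink: "j \<in> cols F \<Longrightarrow> j \<in> nonsink F"
proof -
  assume j: "j \<in> cols F"
  then have "j \<noteq> 0" using zero_row rc_disj by metis
  then show ?thesis using cols_le[OF j] unfolding nonsink_def by simp
qed
lemma row_nonsink: "i \<in> rows F \<Longrightarrow> i \<noteq> 0 \<Longrightarrow> i \<in> nonsink F"
  using rows_le unfolding nonsink_def by auto
lemma nonsink_cases: "v \<in> nonsink F \<Longrightarrow> (v \<in> rows F \<and> v \<noteq> 0) \<or> v \<in> cols F"
  using rc_all unfolding nonsink_def by auto
lemma nonsink_le: "v \<in> nonsink F \<Longrightarrow> v \<le> fst F \<and> v \<noteq> 0"
  unfolding nonsink_def by auto

lemma adj_sym: "adj F u v = adj F v u"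
  unfolding adj_def by auto

lemma nbr_row: "i \<in> rows F \<Longrightarrow> {u. u \<le> fst F \<and> adj F u i} = {j. cell F i j}"
proof (intro set_eqI iffI)
  fix u assume i: "i \<in> rows F" and "u \<in> {u. u \<le> fst F \<and> adj F u i}"
  then have "cell F u i \<or> cell F i u" unfolding adj_def by auto
  moreover have "\<not> cell F u i" using i rc_disj cellD by blast
  ultimately show "u \<in> {j. cell F i j}" by simp
next
  fix u assume "u \<in> {j. cell F i j}"
  then show "u \<in> {u. u \<le> fst F \<and> adj F u i}" unfolding adj_def using cellD by auto
qed
lemma nbr_col: "j \<in> cols F \<Longrightarrow> {u. u \<le> fst F \<and> adj F u j} = {i. cell F i j}"
proof (intro set_eqI iffI)
  fix u assume j: "j \<in> cols F" and "u \<in> {u. u \<le> fst F \<and> adj F u j}"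
  then have "cell F u j \<or> cell F j u" unfolding adj_def by auto
  moreover have "\<not> cell F j u" using j rc_disj cellD by blast
  ultimately show "u \<in> {i. cell F i j}" by simp
next
  fix u assume "u \<in> {i. cell F i j}"
  then show "u \<in> {u. u \<le> fst F \<and> adj F u j}" unfolding adj_def using cellD
    by (metis less_imp_le_nat mem_Collect_eq order.strict_trans2)
qed

lemma fin_rowcells: "finite {j. cell F i j \<and> P j}"
  by (rule finite_subset[of _ "{..fst F}"]) (auto dest: cellD)
lemma fin_colcells: "finite {i. cell F i j \<and> P i}"
  by (rule finite_subset[of _ "{..fst F}"]) (auto dest!: cellD)

definition onesR where "onesR i = {j. cell F i j \<and> T i j = 1}"
definition zerosR where "zerosR i = {j. cell F i j \<and> T i j = 0}"
definition onesC where "onesC j = {i. cell F i j \<and> T i j = 1}"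
definition zerosC where "zerosC j = {i. cell F i j \<and> T i j = 0}"

lemma deg_row: "i \<in> rows F \<Longrightarrow> deg F i = card (onesR i) + card (zerosR i)"
proof -
  assume i: "i \<in> rows F"
  have "{j. cell F i j} = onesR i \<union> zerosR i"
    unfolding onesR_def zerosR_def using T_01 by blast
  moreover have "onesR i \<inter> zerosR i = {}" unfolding onesR_def zerosR_def by auto
  ultimately show ?thesis unfolding deg_def nbr_row[OF i]
    by (simp add: card_Un_disjoint fin_rowcells onesR_def zerosR_def)
qed

lemma deg_col: "j \<in> cols F \<Longrightarrow> deg F j = card (onesC j) + card (zerosC j)"
proof -
  assume j: "j \<in> cols F"
  have "{i. cell F i j} = onesC j \<union> zerosC j"
    unfolding onesC_def zerosC_def using T_01 by blast
  moreover have "onesC j \<inter> zerosC j = {}" unfolding onesC_def zerosC_def by auto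
  ultimately show ?thesis unfolding deg_def nbr_col[OF j]
    by (simp add: card_Un_disjoint fin_colcells onesC_def zerosC_def)
qed

abbreviation "c \<equiv> phi_TC F T"

lemma c_row: "i \<in> rows F \<Longrightarrow> i \<noteq> 0 \<Longrightarrow> c i = card (onesR i)"
  unfolding phi_TC_def onesR_def using row_nonsink by auto
lemma c_col: "j \<in> cols F \<Longrightarrow> c j = card (zerosC j)"
  unfolding phi_TC_def zerosC_def using col_nonsink rc_disj by auto

lemma c_lt_deg: "v \<in> nonsink F \<Longrightarrow> c v < deg F v"
proof -
  assume v: "v \<in> nonsink F"
  then consider "v \<in> rows F" "v \<noteq> 0" | "v \<in> cols F" using nonsink_cases by blast
  then show ?thesis
  proof cases
    case 1
    then obtain j where "cell F v j" "T v j = 0" using T_zero by blast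
    then have "zerosR v \<noteq> {}" unfolding zerosR_def by auto
    moreover have "finite (zerosR v)" unfolding zerosR_def by (rule fin_rowcells)
    ultimately have "card (zerosR v) > 0" by (auto simp: card_gt_0_iff)
    then show ?thesis using 1 deg_row c_row by simp
  next
    case 2
    then have "cell F 0 v" unfolding cell_def using zero_row col_nonsink nonsink_le by auto
    then have "0 \<in> onesC v" using T_top unfolding onesC_def by auto
    moreover have "finite (onesC v)" unfolding onesC_def by (rule fin_colcells)
    ultimately have "card (onesC v) > 0" by (auto simp: card_gt_0_iff)
    then show ?thesis using 2 deg_col c_col by simp
  qed
qed

end


context ew begin

definition N where "N S v = card {u\<in>S. u \<le> fst F \<and> adj F v u}"
definition Icfg where "Icfg S d \<longleftrightarrow> (\<forall>v\<in>nonsink F. d v = c v + N S v - (if v\<in>S then deg F v else 0)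
     \<and> (v\<in>S \<longrightarrow> deg F v \<le> c v + N S v))"
definition Icons where "Icons S \<longleftrightarrow> (\<forall>i j. cell F i j \<longrightarrow> (i\<in>S \<and> j\<notin>S \<longrightarrow> T i j = 1) \<and> (j\<in>S \<and> i\<notin>S \<longrightarrow> T i j = 0))"

lemma N_le_deg: "N S v \<le> deg F v"
  unfolding N_def deg_def
  by (rule card_mono) (auto simp: adj_sym)

lemma N_Un: "S \<inter> B = {} \<Longrightarrow> N (S\<union>B) v = N S v + N B v"
proof -
  assume d: "S \<inter> B = {}"
  have "{u\<in>S\<union>B. u \<le> fst F \<and> adj F v u} = {u\<in>S. u \<le> fst F \<and> adj F v u} \<union> {u\<in>B. u \<le> fst F \<and> adj F v u}" by auto
  moreover have "finite {u\<in>S. u \<le> fst F \<and> adj F v u}" by (rule finite_subset[of _ "{..fst F}"]) auto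
  moreover have "finite {u\<in>B. u \<le> fst F \<and> adj F v u}" by (rule finite_subset[of _ "{..fst F}"]) auto
  ultimately show ?thesis unfolding N_def using d by (simp add: card_Un_disjoint disjoint_iff)
qed

lemma topple_val: "v \<in> nonsink F \<Longrightarrow> topple_set F B d v = d v - (if v\<in>B then deg F v else 0) + N B v"
  unfolding topple_set_def N_def by simp

lemma Icfg_step: "Icfg S d \<Longrightarrow> S \<inter> B = {} \<Longrightarrow> (\<forall>u\<in>B\<inter>nonsink F. deg F u \<le> d u)
   \<Longrightarrow> Icfg (S\<union>B) (topple_set F B d)"
  unfolding Icfg_def
proof (intro ballI)
  fix v assume I: "\<forall>v\<in>nonsink F. d v = c v + N S v - (if v\<in>S then deg F v else 0) \<and> (v\<in>S \<longrightarrow> deg F v \<le> c v + N S v)"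
    and dj: "S \<inter> B = {}" and un: "\<forall>u\<in>B\<inter>nonsink F. deg F u \<le> d u" and v: "v \<in> nonsink F"
  have tv: "topple_set F B d v = d v - (if v\<in>B then deg F v else 0) + N B v" using topple_val[OF v] .
  have NU: "N (S\<union>B) v = N S v + N B v" using N_Un[OF dj] .
  have Iv: "d v = c v + N S v - (if v\<in>S then deg F v else 0)" "v\<in>S \<longrightarrow> deg F v \<le> c v + N S v" using I v by auto
  show "topple_set F B d v = c v + N (S\<union>B) v - (if v \<in> S\<union>B then deg F v else 0) \<and>
          (v \<in> S\<union>B \<longrightarrow> deg F v \<le> c v + N (S\<union>B) v)"
  proof (cases "v \<in> S")
    case True
    then have "v \<notin> B" using dj by auto
    then show ?thesis using True tv NU Iv by auto
  next
    case False
    show ?thesis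
    proof (cases "v \<in> B")
      case True
      then have "deg F v \<le> d v" using un v by auto
      then show ?thesis using True False tv NU Iv by auto
    next
      case False2: False
      then show ?thesis using False tv NU Iv by auto
    qed
  qed
qed

lemma stable_in_S: "Icfg S d \<Longrightarrow> v\<in>S \<Longrightarrow> v\<in>nonsink F \<Longrightarrow> d v < deg F v"
  unfolding Icfg_def using c_lt_deg[of v] N_le_deg[of S v] by auto

lemma N_col: "j \<in> cols F \<Longrightarrow> N S j = card {i\<in>S. cell F i j}"
proof -
  assume j: "j \<in> cols F"
  have "{u\<in>S. u \<le> fst F \<and> adj F j u} = {i\<in>S. cell F i j}"
    unfolding adj_def using j rc_disj cellD by (metis less_imp_le_nat order.strict_trans2)
  then show ?thesis unfolding N_def by simp
qed

lemma N_row: "i \<in> rows F \<Longrightarrow> N S i = card {j\<in>S. cell F i j}"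
proof -
  assume i: "i \<in> rows F"
  have "{u\<in>S. u \<le> fst F \<and> adj F i u} = {j\<in>S. cell F i j}"
    unfolding adj_def using i rc_disj cellD by metis
  then show ?thesis unfolding N_def by simp
qed

lemma unst_col: "Icfg S d \<Longrightarrow> Icons S \<Longrightarrow> j\<in>cols F \<Longrightarrow> j\<notin>S \<Longrightarrow> (deg F j \<le> d j \<longleftrightarrow> onesC j \<subseteq> S)"
proof -
  assume I: "Icfg S d" and C: "Icons S" and j: "j\<in>cols F" and jS: "j\<notin>S"
  have dj: "d j = c j + N S j" using I jS col_nonsink[OF j] unfolding Icfg_def by auto
  define A where "A = {i\<in>S. cell F i j}"
  have AO: "A \<subseteq> onesC j" unfolding A_def onesC_def using C jS unfolding Icons_def by auto
  have fO: "finite (onesC j)" unfolding onesC_def by (rule fin_colcells)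
  have "deg F j \<le> d j \<longleftrightarrow> card (onesC j) \<le> card A"
    using dj deg_col[OF j] c_col[OF j] N_col[OF j, of S] unfolding A_def by auto
  also have "\<dots> \<longleftrightarrow> A = onesC j"
    using AO fO card_seteq[OF fO AO] card_mono[OF fO AO] by auto
  also have "\<dots> \<longleftrightarrow> onesC j \<subseteq> S"
    using AO unfolding A_def onesC_def by auto
  finally show ?thesis .
qed

lemma unst_row: "Icfg S d \<Longrightarrow> Icons S \<Longrightarrow> i\<in>rows F \<Longrightarrow> i \<noteq> 0 \<Longrightarrow> i\<notin>S \<Longrightarrow> (deg F i \<le> d i \<longleftrightarrow> zerosR i \<subseteq> S)"
proof -
  assume I: "Icfg S d" and C: "Icons S" and i: "i\<in>rows F" and i0: "i \<noteq> 0" and iS: "i\<notin>S"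
  have di: "d i = c i + N S i" using I iS row_nonsink[OF i i0] unfolding Icfg_def by auto
  define A where "A = {j\<in>S. cell F i j}"
  have AO: "A \<subseteq> zerosR i" unfolding A_def zerosR_def using C iS unfolding Icons_def by auto
  have fO: "finite (zerosR i)" unfolding zerosR_def by (rule fin_rowcells)
  have "deg F i \<le> d i \<longleftrightarrow> card (zerosR i) \<le> card A"
    using di deg_row[OF i] c_row[OF i i0] N_row[OF i, of S] unfolding A_def by auto
  also have "\<dots> \<longleftrightarrow> A = zerosR i"
    using AO fO card_seteq[OF fO AO] card_mono[OF fO AO] by auto
  also have "\<dots> \<longleftrightarrow> zerosR i \<subseteq> S"
    using AO unfolding A_def zerosR_def by auto
  finally show ?thesis .
qed

lemma Icons_step_col: "Icons S \<Longrightarrow> B \<subseteq> cols F \<Longrightarrow> (\<forall>j\<in>B. onesC j \<subseteq> S) \<Longrightarrow> Icons (S\<union>B)"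
  unfolding Icons_def
proof (intro allI impI conjI)
  fix i j assume C: "\<forall>i j. cell F i j \<longrightarrow> (i \<in> S \<and> j \<notin> S \<longrightarrow> T i j = 1) \<and> (j \<in> S \<and> i \<notin> S \<longrightarrow> T i j = 0)"
    and B: "B \<subseteq> cols F" and O: "\<forall>j\<in>B. onesC j \<subseteq> S" and cij: "cell F i j"
  have ir: "i \<in> rows F" using cellD[OF cij] by auto
  then have iB: "i \<notin> B" using B rc_disj by auto
  show "i \<in> S \<union> B \<and> j \<notin> S \<union> B \<Longrightarrow> T i j = 1" using C cij iB by auto
  show "j \<in> S \<union> B \<and> i \<notin> S \<union> B \<Longrightarrow> T i j = 0"
  proof -
    assume a: "j \<in> S \<union> B \<and> i \<notin> S \<union> B"
    show ?thesis
    proof (cases "j \<in> S")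
      case True then show ?thesis using a C cij by auto
    next
      case False
      then have "j \<in> B" using a by auto
      then have "onesC j \<subseteq> S" using O by auto
      then have "T i j \<noteq> 1" using a cij unfolding onesC_def by auto
      then show ?thesis using T_01[OF cij] by auto
    qed
  qed
qed

lemma Icons_step_row: "Icons S \<Longrightarrow> B \<subseteq> rows F \<Longrightarrow> (\<forall>i\<in>B. zerosR i \<subseteq> S) \<Longrightarrow> Icons (S\<union>B)"
  unfolding Icons_def
proof (intro allI impI conjI)
  fix i j assume C: "\<forall>i j. cell F i j \<longrightarrow> (i \<in> S \<and> j \<notin> S \<longrightarrow> T i j = 1) \<and> (j \<in> S \<and> i \<notin> S \<longrightarrow> T i j = 0)"
    and B: "B \<subseteq> rows F" and O: "\<forall>i\<in>B. zerosR i \<subseteq> S" and cij: "cell F i j"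
  have jc: "j \<in> cols F" using cellD[OF cij] by auto
  then have jB: "j \<notin> B" using B rc_disj by auto
  show "j \<in> S \<union> B \<and> i \<notin> S \<union> B \<Longrightarrow> T i j = 0" using C cij jB by auto
  show "i \<in> S \<union> B \<and> j \<notin> S \<union> B \<Longrightarrow> T i j = 1"
  proof -
    assume a: "i \<in> S \<union> B \<and> j \<notin> S \<union> B"
    show ?thesis
    proof (cases "i \<in> S")
      case True then show ?thesis using a C cij by auto
    next
      case False
      then have "i \<in> B" using a by auto
      then have "zerosR i \<subseteq> S" using O by auto
      then have "T i j \<noteq> 0" using a cij unfolding zerosR_def by auto
      then show ?thesis using T_01[OF cij] by auto
    qed
  qed
qed

end


context ew begin

abbreviation "cfg k \<equiv> canon_cfg F c k"
abbreviation "blk k \<equiv> canon_blk F c k"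
definition Sk where "Sk k = {v. \<exists>m<k. v \<in> blk m}"

lemma Sk_0: "Sk 0 = {}" unfolding Sk_def by simp
lemma Sk_Suc: "Sk (Suc k) = Sk k \<union> blk k" unfolding Sk_def using less_Suc_eq by auto
lemma blk_0: "blk 0 = {0}" unfolding canon_blk_def canon_blk_of_def by simp
lemma blk_pos: "k > 0 \<Longrightarrow> blk k = {v\<in>nonsink F. (if odd k then v\<in>cols F else v\<in>rows F) \<and> deg F v \<le> cfg k v}"
  unfolding canon_blk_def canon_blk_of_def by simp
lemma cfg_Suc: "cfg (Suc k) = topple_set F (blk k) (cfg k)"
  by (simp add: canon_blk_def)
lemma cfg_0: "cfg 0 = c" by simp

lemma blk_sub: "blk k \<subseteq> {0..fst F}"
  by (cases "k = 0") (auto simp: blk_0 blk_pos nonsink_def)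

lemma inv: "Icfg (Sk k) (cfg k) \<and> Icons (Sk k) \<and> Sk k \<subseteq> {0..fst F}"
proof (induction k)
  case 0
  show ?case unfolding Sk_0 Icfg_def Icons_def N_def by simp
next
  case (Suc k)
  then have I: "Icfg (Sk k) (cfg k)" and C: "Icons (Sk k)" and Sb: "Sk k \<subseteq> {0..fst F}" by auto
  have dj: "Sk k \<inter> blk k = {}"
  proof (cases "k = 0")
    case True then show ?thesis by (simp add: Sk_0)
  next
    case False
    show ?thesis
    proof (rule ccontr)
      assume "Sk k \<inter> blk k \<noteq> {}"
      then obtain v where v: "v \<in> Sk k" "v \<in> blk k" by auto
      then have "v \<in> nonsink F" "deg F v \<le> cfg k v" using blk_pos False by auto
      then show False using stable_in_S[OF I v(1)] by auto
    qed
  qed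
  have un: "\<forall>u\<in>blk k \<inter> nonsink F. deg F u \<le> cfg k u"
    by (cases "k = 0") (auto simp: blk_0 blk_pos nonsink_def)
  have I': "Icfg (Sk (Suc k)) (cfg (Suc k))"
    unfolding Sk_Suc cfg_Suc by (rule Icfg_step[OF I dj un])
  have C': "Icons (Sk (Suc k))"
  proof (cases "k = 0")
    case True
    show ?thesis unfolding Sk_Suc True blk_0
      apply (rule Icons_step_row)
      using C True apply simp
      using zero_row apply simp
      using T_top unfolding zerosR_def by auto
  next
    case False
    show ?thesis
    proof (cases "odd k")
      case True
      show ?thesis unfolding Sk_Suc
      proof (rule Icons_step_col[OF C])
        show "blk k \<subseteq> cols F" using blk_pos False True by auto
        show "\<forall>j\<in>blk k. onesC j \<subseteq> Sk k"
        proof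
          fix j assume j: "j \<in> blk k"
          then have jc: "j \<in> cols F" and d: "deg F j \<le> cfg k j" using blk_pos False True by auto
          have "j \<notin> Sk k" using dj j by auto
          then show "onesC j \<subseteq> Sk k" using unst_col[OF I C jc] d by auto
        qed
      qed
    next
      case ev: False
      show ?thesis unfolding Sk_Suc
      proof (rule Icons_step_row[OF C])
        show "blk k \<subseteq> rows F" using blk_pos False ev by auto
        show "\<forall>i\<in>blk k. zerosR i \<subseteq> Sk k"
        proof
          fix i assume i: "i \<in> blk k"
          then have ir: "i \<in> rows F" and d: "deg F i \<le> cfg k i" and i0: "i \<noteq> 0"
            using blk_pos False ev nonsink_def by auto
          have "i \<notin> Sk k" using dj i by auto
          then show "zerosR i \<subseteq> Sk k" using unst_row[OF I C ir i0] d by auto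
        qed
      qed
    qed
  qed
  show ?case using I' C' Sb blk_sub Sk_Suc by auto
qed

lemma blk_char_odd: "odd k \<Longrightarrow> v \<in> blk k \<longleftrightarrow> v \<in> cols F \<and> v \<notin> Sk k \<and> onesC v \<subseteq> Sk k"
proof -
  assume k: "odd k"
  then have k0: "k > 0" by (cases k) auto
  have I: "Icfg (Sk k) (cfg k)" and C: "Icons (Sk k)" using inv by auto
  show ?thesis
  proof
    assume v: "v \<in> blk k"
    then have vc: "v \<in> cols F" and d: "deg F v \<le> cfg k v" and vn: "v \<in> nonsink F" using blk_pos[OF k0] k by auto
    have "v \<notin> Sk k" using stable_in_S[OF I _ vn] d by auto
    then show "v \<in> cols F \<and> v \<notin> Sk k \<and> onesC v \<subseteq> Sk k" using unst_col[OF I C vc] d vc by auto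
  next
    assume "v \<in> cols F \<and> v \<notin> Sk k \<and> onesC v \<subseteq> Sk k"
    then show "v \<in> blk k" using unst_col[OF I C] blk_pos[OF k0] k col_nonsink by auto
  qed
qed

lemma blk_char_even: "even k \<Longrightarrow> k > 0 \<Longrightarrow> v \<in> blk k \<longleftrightarrow> v \<in> rows F \<and> v \<noteq> 0 \<and> v \<notin> Sk k \<and> zerosR v \<subseteq> Sk k"
proof -
  assume k: "even k" and k0: "k > 0"
  have I: "Icfg (Sk k) (cfg k)" and C: "Icons (Sk k)" using inv by auto
  show ?thesis
  proof
    assume v: "v \<in> blk k"
    then have vc: "v \<in> rows F" and d: "deg F v \<le> cfg k v" and vn: "v \<in> nonsink F" using blk_pos[OF k0] k by auto
    have v0: "v \<noteq> 0" using vn nonsink_def by auto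
    have "v \<notin> Sk k" using stable_in_S[OF I _ vn] d by auto
    then show "v \<in> rows F \<and> v \<noteq> 0 \<and> v \<notin> Sk k \<and> zerosR v \<subseteq> Sk k" using unst_row[OF I C vc v0] d vc v0 by auto
  next
    assume "v \<in> rows F \<and> v \<noteq> 0 \<and> v \<notin> Sk k \<and> zerosR v \<subseteq> Sk k"
    then show "v \<in> blk k" using unst_row[OF I C] blk_pos[OF k0] k row_nonsink by auto
  qed
qed

end


context ew begin

lemma no_closed: "finite UC \<Longrightarrow> UC \<subseteq> cols F \<Longrightarrow> UR \<subseteq> rows F \<Longrightarrow>
  \<forall>i\<in>UR. \<exists>j\<in>UC. cell F i j \<and> T i j = 0 \<Longrightarrow> \<forall>j\<in>UC. \<exists>i\<in>UR. cell F i j \<and> T i j = 1 \<Longrightarrow> UC \<noteq> {} \<Longrightarrow> False"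
proof (induction "card UC" arbitrary: UC UR rule: less_induct)
  case less
  note fin = less.prems(1) and UCc = less.prems(2) and URr = less.prems(3)
    and clR = less.prems(4) and clC = less.prems(5) and ne = less.prems(6)
  define a where "a = Max UC"
  have aU: "a \<in> UC" using fin ne unfolding a_def by simp
  have amax: "\<And>j. j \<in> UC \<Longrightarrow> j \<le> a" using fin unfolding a_def by simp
  define Ob where "Ob = {i\<in>UR. cell F i a \<and> T i a = 1}"
  define UC' where "UC' = {j\<in>UC. j \<noteq> a \<and> (\<exists>i\<in>Ob. cell F i j \<and> T i j = 0)}"
  have sub: "UC' \<subseteq> UC - {a}" unfolding UC'_def by auto
  have lt: "card UC' < card UC"
    using fin aU sub by (meson card_Diff1_less card_mono finite_Diff order_le_less_trans)
  have fin': "finite UC'" using fin sub finite_subset by blast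
  have clR': "\<forall>i\<in>Ob. \<exists>j\<in>UC'. cell F i j \<and> T i j = 0"
  proof
    fix i assume iO: "i \<in> Ob"
    then obtain j where j: "j \<in> UC" "cell F i j" "T i j = 0" using clR unfolding Ob_def by blast
    have "j \<noteq> a" using j iO unfolding Ob_def by auto
    then show "\<exists>j\<in>UC'. cell F i j \<and> T i j = 0" using j iO unfolding UC'_def by blast
  qed
  have clC': "\<forall>j\<in>UC'. \<exists>i\<in>Ob. cell F i j \<and> T i j = 1"
  proof
    fix j assume jU: "j \<in> UC'"
    then obtain i where iO: "i \<in> Ob" and cij: "cell F i j" and Tij: "T i j = 0" and ja: "j \<noteq> a" and jUC: "j \<in> UC"
      unfolding UC'_def by blast
    obtain i2 where i2: "i2 \<in> UR" "cell F i2 j" "T i2 j = 1" using clC jUC by blast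
    have jlt: "j < a" using amax[OF jUC] ja by auto
    have cia: "cell F i a" "T i a = 1" using iO unfolding Ob_def by auto
    have ac: "a \<in> cols F" using aU UCc by auto
    have ci2a: "cell F i2 a" using cellD[OF i2(2)] ac jlt unfolding cell_def by auto
    have "T i2 a = 1"
    proof (rule ccontr)
      assume "T i2 a \<noteq> 1"
      then have T0: "T i2 a = 0" using T_01[OF ci2a] by auto
      have "i \<noteq> i2" using Tij i2(3) by auto
      then consider "i < i2" | "i2 < i" by linarith
      then show False
      proof cases
        case 1
        from T_rect[OF 1 jlt cij cia(1) i2(2) ci2a] show False using Tij T0 cia i2 by auto
      next
        case 2
        from T_rect[OF 2 jlt i2(2) ci2a cij cia(1)] show False using Tij T0 cia i2 by auto
      qed
    qed
    then have "i2 \<in> Ob" using i2 ci2a unfolding Ob_def by auto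
    then show "\<exists>i\<in>Ob. cell F i j \<and> T i j = 1" using i2 by blast
  qed
  have ne': "UC' \<noteq> {}"
  proof -
    obtain i where i: "i \<in> UR" "cell F i a" "T i a = 1" using clC aU by blast
    then have "i \<in> Ob" unfolding Ob_def by auto
    then show ?thesis using clR' by auto
  qed
  show False
    using less.hyps[OF lt fin' _ _ clR' clC' ne'] sub UCc URr unfolding Ob_def by auto
qed

lemma zero_S: "k > 0 \<Longrightarrow> 0 \<in> Sk k"
  unfolding Sk_def using blk_0 by auto

lemma progress: "odd k \<Longrightarrow> v \<le> fst F \<Longrightarrow> v \<notin> Sk k \<Longrightarrow> Sk k \<subset> Sk (Suc (Suc k))"
proof -
  assume k: "odd k" and vn: "v \<le> fst F" and vS: "v \<notin> Sk k"
  have k0: "k > 0" using k by (cases k) auto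
  have sub: "Sk k \<subseteq> Sk (Suc (Suc k))" unfolding Sk_Suc by auto
  show ?thesis
  proof (rule ccontr)
    assume "\<not> Sk k \<subset> Sk (Suc (Suc k))"
    then have eq: "Sk (Suc (Suc k)) = Sk k" using sub by auto
    have b1: "blk k = {}" using eq blk_char_odd[OF k] unfolding Sk_Suc by blast
    then have S1: "Sk (Suc k) = Sk k" unfolding Sk_Suc by simp
    have ev: "even (Suc k)" using k by simp
    have b2: "blk (Suc k) = {}" using eq blk_char_even[OF ev] unfolding Sk_Suc S1 by blast
    define UC where "UC = cols F - Sk k"
    define UR where "UR = rows F - Sk k"
    have finUC: "finite UC" unfolding UC_def cols_def by auto
    have clR: "\<forall>i\<in>UR. \<exists>j\<in>UC. cell F i j \<and> T i j = 0"
    proof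
      fix i assume i: "i \<in> UR"
      then have i0: "i \<noteq> 0" using zero_S[OF k0] unfolding UR_def by (metis DiffD2)
      have "\<not> zerosR i \<subseteq> Sk k" using b2 blk_char_even[OF ev, of i] i i0 S1 unfolding UR_def by auto
      then obtain j where "j \<in> zerosR i" "j \<notin> Sk k" by auto
      then show "\<exists>j\<in>UC. cell F i j \<and> T i j = 0" unfolding UC_def zerosR_def using cellD by auto
    qed
    have clC: "\<forall>j\<in>UC. \<exists>i\<in>UR. cell F i j \<and> T i j = 1"
    proof
      fix j assume j: "j \<in> UC"
      have "\<not> onesC j \<subseteq> Sk k" using b1 blk_char_odd[OF k, of j] j unfolding UC_def by auto
      then obtain i where "i \<in> onesC j" "i \<notin> Sk k" by auto
      then show "\<exists>i\<in>UR. cell F i j \<and> T i j = 1" unfolding UR_def onesC_def using cellD by auto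
    qed
    have ne: "UC \<noteq> {}"
    proof (cases "v \<in> cols F")
      case True then show ?thesis using vS unfolding UC_def by auto
    next
      case False
      then have "v \<in> UR" using rc_all[OF vn] vS unfolding UR_def by auto
      then show ?thesis using clR by auto
    qed
    show False using no_closed[OF finUC _ _ clR clC ne] unfolding UC_def UR_def by auto
  qed
qed

lemma Sk_fin: "finite (Sk k)" using inv[of k] finite_subset by blast

lemma full_aux: "{0..fst F} \<subseteq> Sk (2*m+1) \<or> m + 1 \<le> card (Sk (2*m+1))"
proof (induction m)
  case 0
  have "Sk 1 = {0}" using Sk_Suc[of 0] Sk_0 blk_0 by simp
  then show ?case by simp
next
  case (Suc m)
  have eq: "2 * Suc m + 1 = Suc (Suc (2*m+1))" by simp
  have sub: "Sk (2*m+1) \<subseteq> Sk (2 * Suc m + 1)" unfolding eq Sk_Suc by auto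
  show ?case
  proof (cases "{0..fst F} \<subseteq> Sk (2*m+1)")
    case True then show ?thesis using sub by auto
  next
    case False
    then obtain v where v0: "v \<in> {0..fst F}" "v \<notin> Sk (2*m+1)" by blast
    then have v: "v \<le> fst F" "v \<notin> Sk (2*m+1)" by auto
    have "Sk (2*m+1) \<subset> Sk (2 * Suc m + 1)" unfolding eq by (rule progress) (use v in auto)
    then have "card (Sk (2*m+1)) < card (Sk (2 * Suc m + 1))" using Sk_fin psubset_card_mono by blast
    then show ?thesis using Suc False by auto
  qed
qed

lemma all_topple: "v \<le> fst F \<Longrightarrow> \<exists>k. v \<in> blk k"
proof -
  assume v: "v \<le> fst F"
  let ?k = "2 * fst F + 1"
  have "{0..fst F} \<subseteq> Sk ?k"
  proof (cases "{0..fst F} \<subseteq> Sk ?k")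
    case False
    then have "fst F + 1 \<le> card (Sk ?k)" using full_aux[of "fst F"] by auto
    moreover have "Sk ?k \<subseteq> {0..fst F}" using inv by auto
    ultimately have "Sk ?k = {0..fst F}" using card_seteq[of "{0..fst F}" "Sk ?k"] by auto
    then show ?thesis by auto
  qed auto
  then show ?thesis using v unfolding Sk_def by auto
qed

lemma tt_in: "v \<le> fst F \<Longrightarrow> v \<in> blk (topple_time F c v)"
  unfolding topple_time_def using all_topple by (rule LeastI_ex)

lemma tt_Sk: "v \<le> fst F \<Longrightarrow> v \<in> Sk k \<longleftrightarrow> topple_time F c v < k"
proof
  assume v: "v \<le> fst F"
  show "v \<in> Sk k \<Longrightarrow> topple_time F c v < k"
    unfolding Sk_def topple_time_def using Least_le[of "\<lambda>k. v \<in> blk k"] le_less_trans by blast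
  show "topple_time F c v < k \<Longrightarrow> v \<in> Sk k" unfolding Sk_def using tt_in[OF v] by auto
qed

lemma phiCT_cell: "phi_CT F c i j = T i j"
proof (cases "cell F i j")
  case False
  then show ?thesis unfolding phi_CT_def using T_off by auto
next
  case True
  note cD = cellD[OF True]
  have iF: "i \<le> fst F" using cD by auto
  have jF: "j \<le> fst F" using cD by auto
  define ti where "ti = topple_time F c i"
  define tj where "tj = topple_time F c j"
  have bi: "i \<in> blk ti" using tt_in[OF iF] unfolding ti_def .
  have bj: "j \<in> blk tj" using tt_in[OF jF] unfolding tj_def .
  have ne: "ti \<noteq> tj"
  proof
    assume e: "ti = tj"
    show False
    proof (cases "ti = 0")
      case True
      then have "j = 0" using bj e blk_0 by auto
      then show False using cD zero_row rc_disj by auto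
    next
      case False
      then show False using bi bj e blk_pos[of ti] cD rc_disj by (auto split: if_splits)
    qed
  qed
  have C: "\<And>k. Icons (Sk k)" using inv by auto
  show ?thesis
  proof (cases "ti < tj")
    case True
    then have "i \<in> Sk tj" "j \<notin> Sk tj" using tt_Sk[OF iF] tt_Sk[OF jF] unfolding ti_def tj_def by auto
    then have "T i j = 1" using C[of tj] \<open>cell F i j\<close> unfolding Icons_def by auto
    then show ?thesis unfolding phi_CT_def topples_before_def using True \<open>cell F i j\<close> unfolding ti_def tj_def by auto
  next
    case False
    then have lt: "tj < ti" using ne by auto
    then have "j \<in> Sk ti" "i \<notin> Sk ti" using tt_Sk[OF iF] tt_Sk[OF jF] unfolding ti_def tj_def by auto
    then have "T i j = 0" using C[of ti] \<open>cell F i j\<close> unfolding Icons_def by auto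
    then show ?thesis unfolding phi_CT_def topples_before_def using False \<open>cell F i j\<close> unfolding ti_def tj_def by auto
  qed
qed

lemma phiCT_TC: "phi_CT F (phi_TC F T) = T"
  using phiCT_cell by (intro ext) auto

end

theorem proposition3p10:
  fixes F :: ferrers
  assumes "ferrers F"
    and "bij_betw (phi_TC F) (EWtab F) (Rec_min F)"
  shows "(\<forall>c \<in> Rec_min F. phi_CT F c \<in> EWtab F \<and> phi_TC F (phi_CT F c) = c) \<and>
         (\<forall>T \<in> EWtab F. phi_CT F (phi_TC F T) = T)"
proof -
  have A: "\<forall>T \<in> EWtab F. phi_CT F (phi_TC F T) = T"
  proof
    fix T assume "T \<in> EWtab F"
    then interpret ew F T using assms(1) by unfold_locales auto
    show "phi_CT F (phi_TC F T) = T" by (rule phiCT_TC)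
  qed
  have B: "\<forall>c \<in> Rec_min F. phi_CT F c \<in> EWtab F \<and> phi_TC F (phi_CT F c) = c"
  proof
    fix c assume "c \<in> Rec_min F"
    then obtain T where T: "T \<in> EWtab F" "c = phi_TC F T"
      using assms(2) unfolding bij_betw_def by auto
    then show "phi_CT F c \<in> EWtab F \<and> phi_TC F (phi_CT F c) = c" using A by auto
  qed
  show ?thesis using A B by blast
qed


end
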